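(* Let $R\subseteq\mathbb N$ be sparse and $A$ an operator on $R$. If $A>_R0$ then there is $r\in\mathbb Q_{>1}$ such that $A(\sigma z)>r\,Az$ for all but finitely many $z\in R$; if $A<_R0$ then there is $r\in\mathbb Q_{>1}$ such that $A(\sigma z)<r\,Az$ for all but finitely many $z\in R$. In particular, if $A>_R0$ (resp. $A<_R0$) the map $z\mapsto Az$ on $R$ is eventually strictly increasing (resp. strictly decreasing).
   Context: Let $R\subseteq\mathbb N$ be infinite, enumerated increasingly as $(r_n)_{n\in\mathbb N}$; $\sigma:R\to R$ is the successor map $\sigma(r_n)=r_{n+1}$ and $\sigma^k$ its $k$-fold iterate ($\sigma^0=\mathrm{id}$). An operator on $R$ is a function $R\to\mathbb Z$, $z\mapsto a_m\sigma^m(z)+\dots+a_0\sigma^0(z)$ with $a_i\in\mathbb Z$. For an operator $A$: $A=_R0$ if $Az=0$ for all $z\in R$; $A>_R0$ (resp. $A<_R0$) if $Az>0$ (resp. $Az<0$) for all but finitely many $z\in R$. $R$ is sparse if every operator $A$ satisfies (S1) $A=_R0$ or $A>_R0$ or $A<_R0$; and (S2) if $A>_R0$ then there is $\Delta\in\mathbb N$ with $A(\sigma^\Delta z)>z$ for all $z\in R$. *)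

theory Defs
  imports Complex_Main "HOL-Library.Infinite_Set"
begin

text \<open>R is enumerated increasingly by enumerate R; sigma is the successor map
  sigma(r_n) = r_(n+1) (only meaningful on R).\<close>
definition sigma :: "nat set \<Rightarrow> nat \<Rightarrow> nat" where
  "sigma R z = enumerate R (Suc (the_inv_into UNIV (enumerate R) z))"

text \<open>An operator a_m sigma^m + ... + a_0 sigma^0 is given by its coefficient list
  [a_0, ..., a_m]; op_apply R a z is its value at z.\<close>
definition op_apply :: "nat set \<Rightarrow> int list \<Rightarrow> nat \<Rightarrow> int" where
  "op_apply R a z = (\<Sum>i<length a. a ! i * int ((sigma R ^^ i) z))"

definition op_zero :: "nat set \<Rightarrow> int list \<Rightarrow> bool" where
  "op_zero R a \<longleftrightarrow> (\<forall>z\<in>R. op_apply R a z = 0)"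

definition op_pos :: "nat set \<Rightarrow> int list \<Rightarrow> bool" where
  "op_pos R a \<longleftrightarrow> finite {z\<in>R. \<not> op_apply R a z > 0}"

definition op_neg :: "nat set \<Rightarrow> int list \<Rightarrow> bool" where
  "op_neg R a \<longleftrightarrow> finite {z\<in>R. \<not> op_apply R a z < 0}"

definition sparse :: "nat set \<Rightarrow> bool" where
  "sparse R \<longleftrightarrow> infinite R \<and>
     (\<forall>a. (op_zero R a \<or> op_pos R a \<or> op_neg R a) \<and>
          (op_pos R a \<longrightarrow> (\<exists>\<Delta>::nat. \<forall>z\<in>R. op_apply R a ((sigma R ^^ \<Delta>) z) > int z)))"

end

theory Submission
  imports Defs
begin

lemma sigma_enum: "infinite R \<Longrightarrow> sigma R (enumerate R n) = enumerate R (Suc n)"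
  unfolding sigma_def using inj_enumerate[of R] by (simp add: the_inv_into_f_f)

lemma funpow_enum: "infinite R \<Longrightarrow> (sigma R ^^ j) (enumerate R n) = enumerate R (n + j)"
  by (induction j) (auto simp: sigma_enum)

lemma sigma_in: "infinite R \<Longrightarrow> z \<in> R \<Longrightarrow> (sigma R ^^ j) z \<in> R"
proof -
  assume h: "infinite R" "z \<in> R"
  obtain n where n: "enumerate R n = z" using enumerate_Ex h by blast
  show ?thesis using funpow_enum[OF h(1), of j n] enumerate_in_set[OF h(1)] n by simp
qed

lemma sigma_ge: "infinite R \<Longrightarrow> z \<in> R \<Longrightarrow> i \<le> j \<Longrightarrow> (sigma R ^^ i) z \<le> (sigma R ^^ j) z"
proof -
  assume h: "infinite R" "z \<in> R" "i \<le> j"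
  obtain n where n: "enumerate R n = z" using enumerate_Ex h by blast
  show ?thesis using funpow_enum[OF h(1), of j n] funpow_enum[OF h(1), of i n] h n by simp
qed

lemma sigma_gt: "infinite R \<Longrightarrow> z \<in> R \<Longrightarrow> i < j \<Longrightarrow> (sigma R ^^ i) z < (sigma R ^^ j) z"
proof -
  assume h: "infinite R" "z \<in> R" "i < j"
  obtain n where n: "enumerate R n = z" using enumerate_Ex h by blast
  show ?thesis using funpow_enum[OF h(1), of j n] funpow_enum[OF h(1), of i n] h n by simp
qed

lemma sigma_ge_n: "infinite R \<Longrightarrow> z \<in> R \<Longrightarrow> z + j \<le> (sigma R ^^ j) z"
proof (induction j)
  case 0 then show ?case by simp
next
  case (Suc j)
  have "(sigma R ^^ j) z < (sigma R ^^ Suc j) z" using sigma_gt[OF Suc.prems, of j "Suc j"] by simp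
  then show ?case using Suc by simp
qed

lemma between: assumes "infinite R" "z \<in> R" "z' \<in> R" "z < z'"
  shows "\<exists>j. z' = (sigma R ^^ Suc j) z"
proof -
  obtain n where n: "enumerate R n = z" using enumerate_Ex assms by blast
  obtain n' where n': "enumerate R n' = z'" using enumerate_Ex assms by blast
  have "enumerate R n < enumerate R n'" unfolding n n' by (rule assms(4))
  then have nn: "n < n'" by (rule enumerate_mono_iff[OF assms(1), THEN iffD1])
  obtain j where "n' = Suc (n + j)" using less_imp_Suc_add[OF nn] by blast
  then have "z' = (sigma R ^^ Suc j) z" using n n' funpow_enum[OF assms(1), of "Suc j" n] by simp
  then show ?thesis by (rule exI)
qed

definition coef :: "int list \<Rightarrow> nat \<Rightarrow> int" where
  "coef a i = (if i < length a then a ! i else 0)"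

lemma op_apply_ext: "length a \<le> n \<Longrightarrow>
  op_apply R a z = (\<Sum>i<n. coef a i * int ((sigma R ^^ i) z))"
proof -
  assume h: "length a \<le> n"
  have "(\<Sum>i<n. coef a i * int ((sigma R ^^ i) z)) = (\<Sum>i<length a. coef a i * int ((sigma R ^^ i) z))"
    by (rule sum.mono_neutral_right) (use h in \<open>auto simp: coef_def\<close>)
  also have "\<dots> = op_apply R a z" unfolding op_apply_def by (rule sum.cong) (auto simp: coef_def)
  finally show ?thesis by (rule sym)
qed
definition lin :: "int \<Rightarrow> int list \<Rightarrow> int \<Rightarrow> int list \<Rightarrow> int list" where
  "lin c a d b = map (\<lambda>i. c * coef a i + d * coef b i) [0..<max (length a) (length b)]"

lemma lin_apply: "op_apply R (lin c a d b) z = c * op_apply R a z + d * op_apply R b z"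
proof -
  let ?n = "max (length a) (length b)"
  have "op_apply R (lin c a d b) z = (\<Sum>i<?n. coef (lin c a d b) i * int ((sigma R ^^ i) z))"
    by (rule op_apply_ext) (simp add: lin_def)
  also have "\<dots> = (\<Sum>i<?n. c * (coef a i * int ((sigma R ^^ i) z)) + d * (coef b i * int ((sigma R ^^ i) z)))"
    by (rule sum.cong) (auto simp: coef_def lin_def distrib_right)
  also have "\<dots> = c * (\<Sum>i<?n. coef a i * int ((sigma R ^^ i) z)) + d * (\<Sum>i<?n. coef b i * int ((sigma R ^^ i) z))"
    by (simp only: sum.distrib sum_distrib_left)
  also have "\<dots> = c * op_apply R a z + d * op_apply R b z"
    by (simp only: op_apply_ext[of a ?n R z, symmetric] op_apply_ext[of b ?n R z, symmetric] max.cobounded1 max.cobounded2)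
  finally show ?thesis .
qed

lemma shift_apply: "op_apply R (0 # a) z = op_apply R a (sigma R z)"
  unfolding op_apply_def length_Cons sum.lessThan_Suc_shift by (simp add: funpow_Suc_right del: funpow.simps)

lemma neg_apply: "op_apply R (map uminus a) z = - op_apply R a z"
  unfolding op_apply_def by (simp add: sum_negf)

lemma bound: "op_apply R a z \<le> (\<Sum>i<length a. \<bar>a ! i\<bar>) * int ((sigma R ^^ (length a - 1)) z)"
  if "infinite R" "z \<in> R"
proof -
  have "op_apply R a z \<le> (\<Sum>i<length a. \<bar>a ! i\<bar> * int ((sigma R ^^ (length a - 1)) z))"
    unfolding op_apply_def
  proof (rule sum_mono)
    fix i assume "i \<in> {..<length a}"
    then have "(sigma R ^^ i) z \<le> (sigma R ^^ (length a - 1)) z" using sigma_ge that by auto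
    then show "a ! i * int ((sigma R ^^ i) z) \<le> \<bar>a ! i\<bar> * int ((sigma R ^^ (length a - 1)) z)"
      by (auto intro!: mult_mono)
  qed
  then show ?thesis by (simp add: sum_distrib_right)
qed

lemma fin_bound: "finite {z\<in>(R::nat set). \<not> P z} \<Longrightarrow> \<exists>N. \<forall>z\<in>R. N \<le> z \<longrightarrow> P z"
proof -
  assume "finite {z\<in>R. \<not> P z}"
  then have "\<exists>N. {z\<in>R. \<not> P z} \<subseteq> {..<N}" by (rule finite_nat_bounded)
  then obtain N where sub: "{z\<in>R. \<not> P z} \<subseteq> {..<N}" by (rule exE)
  show ?thesis
  proof (intro exI[of _ N] ballI impI)
    fix z assume z: "z \<in> R" "N \<le> z"
    show "P z"
    proof (rule ccontr)
      assume "\<not> P z"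
      then have "z \<in> {z\<in>R. \<not> P z}" using z by simp
      then have "z \<in> {..<N}" using sub by blast
      then show False using z by simp
    qed
  qed
qed


lemma pos_main:
  assumes inf: "infinite R" and sp: "sparse R" and pos: "op_pos R a"
  shows "\<exists>r::rat. r > 1 \<and>
           finite {z\<in>R. \<not> (of_int (op_apply R a (sigma R z)) > r * of_int (op_apply R a z))}"
proof -
  let ?A = "op_apply R a"
  let ?s = "sigma R"
  have S1: "\<And>b. op_zero R b \<or> op_pos R b \<or> op_neg R b" using sp unfolding sparse_def by blast
  have S2: "\<And>b. op_pos R b \<Longrightarrow> \<exists>\<Delta>::nat. \<forall>z\<in>R. op_apply R b ((?s ^^ \<Delta>) z) > int z"
    using sp unfolding sparse_def by blast
  obtain N0 where N0: "\<forall>z\<in>R. N0 \<le> z \<longrightarrow> ?A z > 0" using fin_bound[of R "\<lambda>z. ?A z > 0"] pos unfolding op_pos_def by blast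
  have exz: "\<exists>z\<in>R. N \<le> z" for N using inf by (meson infinite_nat_iff_unbounded_le)
  define d where "d = lin 1 (0 # a) (-1) a"
  have dapp: "op_apply R d z = ?A (?s z) - ?A z" for z unfolding d_def lin_apply shift_apply by simp
  have dpos: "op_pos R d"
  proof (rule ccontr)
    assume "\<not> op_pos R d"
    then have "op_zero R d \<or> op_neg R d" using S1 by blast
    then obtain N1 where N1: "\<forall>z\<in>R. N1 \<le> z \<longrightarrow> op_apply R d z \<le> 0"
    proof
      assume "op_zero R d"
      then have "\<forall>z\<in>R. 0 \<le> z \<longrightarrow> op_apply R d z \<le> 0" unfolding op_zero_def by simp
      then show ?thesis by (rule that)
    next
      assume "op_neg R d"
      then obtain N where "\<forall>z\<in>R. N \<le> z \<longrightarrow> op_apply R d z < 0" using fin_bound[of R "\<lambda>z. op_apply R d z < 0"] unfolding op_neg_def by blast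
      then have "\<forall>z\<in>R. N \<le> z \<longrightarrow> op_apply R d z \<le> 0" by (simp add: less_imp_le)
      then show ?thesis by (rule that)
    qed
    obtain Da where Da: "\<forall>z\<in>R. ?A ((?s ^^ Da) z) > int z" using S2[OF pos] by blast
    obtain z0 where z0: "z0 \<in> R" "max N0 N1 \<le> z0" using exz by blast
    have dec: "?A ((?s ^^ n) z0) \<le> ?A z0" for n
    proof (induction n)
      case 0 then show ?case by simp
    next
      case (Suc n)
      have "z0 \<le> (?s ^^ n) z0" using sigma_ge_n[OF inf z0(1), of n] by simp
      moreover have "(?s ^^ n) z0 \<in> R" by (rule sigma_in[OF inf z0(1)])
      ultimately have "op_apply R d ((?s ^^ n) z0) \<le> 0" using N1 z0(2) by simp
      then show ?case using Suc dapp by simp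
    qed
    define n where "n = nat (?A z0)"
    define w where "w = (?s ^^ n) z0"
    have wR: "w \<in> R" unfolding w_def using sigma_in[OF inf z0(1)] .
    have "n \<le> w" unfolding w_def using sigma_ge_n[OF inf z0(1), of n] by simp
    moreover have "?A ((?s ^^ Da) w) = ?A ((?s ^^ (Da + n)) z0)" unfolding w_def by (simp add: funpow_add)
    moreover have "?A ((?s ^^ Da) w) > int w" using Da wR by blast
    ultimately have "?A ((?s ^^ (Da + n)) z0) > int n" by linarith
    moreover have "?A z0 > 0" using N0 z0 by auto
    ultimately show False using dec[of "Da + n"] unfolding n_def by simp
  qed
  obtain D where D: "\<forall>z\<in>R. op_apply R d ((?s ^^ D) z) > int z" using S2[OF dpos] by blast
  define m where "m = length a - 1"
  define M where "M = (\<Sum>i<length a. \<bar>a ! i\<bar>)"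
  define E where "E = D + m"
  define K where "K = M * 2 ^ E"
  have bnd: "\<And>z. z \<in> R \<Longrightarrow> ?A z \<le> M * int ((?s ^^ m) z)" unfolding M_def m_def using bound[OF inf] by blast
  have Mpos: "M > 0"
  proof -
    obtain z where z: "z \<in> R" "N0 \<le> z" using exz by blast
    then have "?A z > 0" using N0 by auto
    then have "M * int ((?s ^^ m) z) > 0" using bnd[OF z(1)] by linarith
    moreover have "M \<ge> 0" unfolding M_def by (simp add: sum_nonneg)
    ultimately show ?thesis by (metis le_less mult_zero_left order_less_irrefl)
  qed
  have Kpos: "K > 0" unfolding K_def using Mpos by simp
  define b where "b = lin K (0 # a) (-(K+1)) a"
  have bapp: "op_apply R b z = K * ?A (?s z) - (K+1) * ?A z" for z
    unfolding b_def lin_apply shift_apply by (simp add: algebra_simps)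
  consider "op_pos R b" | "op_zero R b" | "op_neg R b" using S1 by blast
  then show ?thesis
  proof cases
    case 1
    define r where "r = (of_int (K+1) / of_int K :: rat)"
    have "r > 1" unfolding r_def using Kpos by simp
    moreover have "{z\<in>R. \<not> (of_int (?A (?s z)) > r * of_int (?A z))} \<subseteq> {z\<in>R. \<not> op_apply R b z > 0}"
    proof clarify
      fix z assume z: "z \<in> R" "\<not> r * of_int (?A z) < of_int (?A (?s z))" "0 < op_apply R b z"
      then have "(K+1) * ?A z < K * ?A (?s z)" using bapp by simp
      then have "of_int ((K+1) * ?A z) < (of_int (K * ?A (?s z)) :: rat)" by linarith
      then have "of_int (K+1) * of_int (?A z) < of_int K * (of_int (?A (?s z)) :: rat)" by simp
      then have "r * of_int (?A z) < of_int (?A (?s z))" unfolding r_def using Kpos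
        by (simp add: field_simps)
      then show False using z by simp
    qed
    ultimately show ?thesis using 1 unfolding op_pos_def by (meson finite_subset)
  next
    case 2
    define r where "r = (of_int (2*K+1) / of_int (2*K) :: rat)"
    have "r > 1" unfolding r_def using Kpos by simp
    moreover have "{z\<in>R. \<not> (of_int (?A (?s z)) > r * of_int (?A z))} \<subseteq> {z\<in>R. \<not> ?A z > 0}"
    proof clarify
      fix z assume z: "z \<in> R" "\<not> r * of_int (?A z) < of_int (?A (?s z))" "0 < ?A z"
      then have "K * ?A (?s z) = (K+1) * ?A z" using bapp 2 unfolding op_zero_def by fastforce
      then have "(2*K+1) * ?A z < (2*K) * ?A (?s z)" using z(3) by (simp add: algebra_simps)
      then have "of_int ((2*K+1) * ?A z) < (of_int ((2*K) * ?A (?s z)) :: rat)" by linarith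
      then have "of_int (2*K+1) * of_int (?A z) < of_int (2*K) * (of_int (?A (?s z)) :: rat)" by simp
      then have "r * of_int (?A z) < of_int (?A (?s z))" unfolding r_def using Kpos
        by (simp add: field_simps)
      then show False using z by simp
    qed
    ultimately show ?thesis using pos unfolding op_pos_def by (meson finite_subset)
  next
    case 3
    obtain N2 where N2: "\<forall>z\<in>R. N2 \<le> z \<longrightarrow> op_apply R b z < 0" using 3 fin_bound[of R "\<lambda>z. op_apply R b z < 0"] unfolding op_neg_def by blast
    obtain z where z: "z \<in> R" "max N0 N2 \<le> z" using exz by blast
    have wR: "(?s ^^ j) z \<in> R" for j using sigma_in[OF inf z(1)] .
    have wge: "z \<le> (?s ^^ j) z" for j using sigma_ge_n[OF inf z(1), of j] by simp
    have step: "K * ?A (?s ((?s ^^ j) z)) < (K+1) * ?A ((?s ^^ j) z)" for j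
      using N2 wR[of j] wge[of j] z bapp by fastforce
    have Apos: "?A ((?s ^^ j) z) > 0" for j using N0 wR[of j] wge[of j] z by auto
    have grow: "K ^ j * ?A ((?s ^^ j) z) \<le> (K+1) ^ j * ?A z" for j
    proof (induction j)
      case 0 then show ?case by simp
    next
      case (Suc j)
      have "K ^ Suc j * ?A ((?s ^^ Suc j) z) = K ^ j * (K * ?A (?s ((?s ^^ j) z)))" by simp
      also have "\<dots> \<le> K ^ j * ((K+1) * ?A ((?s ^^ j) z))"
        using step[of j] Kpos by (intro mult_left_mono) auto
      also have "\<dots> = (K+1) * (K ^ j * ?A ((?s ^^ j) z))" by (simp add: algebra_simps)
      also have "\<dots> \<le> (K+1) * ((K+1) ^ j * ?A z)" using Suc Kpos by (intro mult_left_mono) auto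
      finally show ?case by (simp add: algebra_simps)
    qed
    let ?w = "(?s ^^ E) z"
    have wE: "?w = (?s ^^ D) ((?s ^^ m) z)" unfolding E_def by (simp add: funpow_add)
    have dw: "op_apply R d ?w > int ((?s ^^ m) z)" using D wR[of m] wE by simp
    have Az: "?A z < M * op_apply R d ?w"
    proof -
      have "?A z \<le> M * int ((?s ^^ m) z)" using bnd z by simp
      also have "\<dots> < M * op_apply R d ?w" using dw Mpos by simp
      finally show ?thesis .
    qed
    have kdw: "K * op_apply R d ?w = K * ?A (?s ?w) - K * ?A ?w" using dapp[of ?w] by (simp add: right_diff_distrib)
    have kd: "K * op_apply R d ?w < ?A ?w" using step[of E] kdw by (simp add: distrib_right)
    have "K ^ E * K * M * op_apply R d ?w \<le> M * (K ^ E * ?A ?w)"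
      using kd Mpos Kpos by (simp add: algebra_simps)
    also have "\<dots> \<le> M * ((K+1) ^ E * ?A z)" using grow[of E] Mpos by simp
    also have "\<dots> \<le> M * ((2*K) ^ E * ?A z)"
    proof -
      have "(K+1) ^ E \<le> (2*K) ^ E" using Kpos by (intro power_mono) auto
      then show ?thesis using Mpos Apos[of 0] by (intro mult_left_mono mult_right_mono) auto
    qed
    also have "\<dots> = K ^ E * K * ?A z" unfolding K_def by (simp add: power_mult_distrib algebra_simps)
    finally have "K ^ E * K * (M * op_apply R d ?w) \<le> K ^ E * K * ?A z" by (simp add: algebra_simps)
    moreover have "K ^ E * K * ?A z < K ^ E * K * (M * op_apply R d ?w)"
      using Az Kpos by simp
    ultimately show ?thesis by simp
  qed
qed


lemma pos_mono:
  assumes inf: "infinite R" and sp: "sparse R" and pos: "op_pos R a"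
  shows "\<exists>N. \<forall>z\<in>R. \<forall>z'\<in>R. N \<le> z \<and> z < z' \<longrightarrow> op_apply R a z < op_apply R a z'"
proof -
  let ?A = "op_apply R a"
  let ?s = "sigma R"
  obtain r :: rat where r: "r > 1" and fin: "finite {z\<in>R. \<not> (of_int (?A (?s z)) > r * of_int (?A z))}"
    using pos_main[OF assms] by blast
  obtain N1 where N1: "\<forall>z\<in>R. N1 \<le> z \<longrightarrow> of_int (?A (?s z)) > r * of_int (?A z)"
    using fin_bound[of R "\<lambda>z. of_int (?A (?s z)) > r * of_int (?A z)"] fin by blast
  obtain N0 where N0: "\<forall>z\<in>R. N0 \<le> z \<longrightarrow> ?A z > 0"
    using fin_bound[of R "\<lambda>z. ?A z > 0"] pos unfolding op_pos_def by blast
  have inc: "?A (?s z) > ?A z" if "z \<in> R" "max N0 N1 \<le> z" for z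
  proof -
    have "?A z > 0" using N0 that by auto
    then have "r * of_int (?A z) \<ge> of_int (?A z)" using r by simp
    moreover have "of_int (?A (?s z)) > r * of_int (?A z)" using N1 that by simp
    ultimately have "of_int (?A (?s z)) > (of_int (?A z) :: rat)" by linarith
    then show ?thesis by simp
  qed
  show ?thesis
  proof (intro exI[of _ "max N0 N1"] ballI impI)
    fix z z' assume z: "z \<in> R" "z' \<in> R" "max N0 N1 \<le> z \<and> z < z'"
    obtain j where j: "z' = (?s ^^ Suc j) z" using between[OF inf z(1,2)] z(3) by blast
    have "?A z < ?A ((?s ^^ Suc i) z)" for i
    proof (induction i)
      case 0 then show ?case using inc z by simp
    next
      case (Suc i)
      have "?A ((?s ^^ Suc i) z) < ?A (?s ((?s ^^ Suc i) z))"
        using inc[of "(?s ^^ Suc i) z"] sigma_in[OF inf z(1), of "Suc i"] sigma_ge_n[OF inf z(1), of "Suc i"] z(3) by simp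
      then show ?case using Suc by simp
    qed
    then show "?A z < ?A z'" using j by simp
  qed
qed

lemma neg_pos: "op_neg R a \<Longrightarrow> op_pos R (map uminus a)"
  unfolding op_neg_def op_pos_def neg_apply by simp

theorem mainTheorem5:
  fixes R :: "nat set" and a :: "int list"
  assumes "infinite R" and "sparse R"
  shows "(op_pos R a \<longrightarrow>
            (\<exists>r::rat. r > 1 \<and>
               finite {z\<in>R. \<not> (of_int (op_apply R a (sigma R z)) > r * of_int (op_apply R a z))}))
       \<and> (op_neg R a \<longrightarrow>
            (\<exists>r::rat. r > 1 \<and>
               finite {z\<in>R. \<not> (of_int (op_apply R a (sigma R z)) < r * of_int (op_apply R a z))}))
       \<and> (op_pos R a \<longrightarrow>
            (\<exists>N. \<forall>z\<in>R. \<forall>z'\<in>R. N \<le> z \<and> z < z' \<longrightarrow> op_apply R a z < op_apply R a z'))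
       \<and> (op_neg R a \<longrightarrow>
            (\<exists>N. \<forall>z\<in>R. \<forall>z'\<in>R. N \<le> z \<and> z < z' \<longrightarrow> op_apply R a z > op_apply R a z'))"
proof (intro conjI impI)
  assume "op_pos R a"
  show "\<exists>r::rat. r > 1 \<and>
               finite {z\<in>R. \<not> (of_int (op_apply R a (sigma R z)) > r * of_int (op_apply R a z))}"
    by (rule pos_main[OF assms \<open>op_pos R a\<close>])
next
  assume "op_pos R a"
  show "\<exists>N. \<forall>z\<in>R. \<forall>z'\<in>R. N \<le> z \<and> z < z' \<longrightarrow> op_apply R a z < op_apply R a z'"
    by (rule pos_mono[OF assms \<open>op_pos R a\<close>])
next
  assume "op_neg R a"
  then obtain r :: rat where "r > 1" "finite {z\<in>R. \<not> (of_int (op_apply R (map uminus a) (sigma R z)) > r * of_int (op_apply R (map uminus a) z))}"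
    using pos_main[OF assms neg_pos[OF \<open>op_neg R a\<close>]] by blast
  then show "\<exists>r::rat. r > 1 \<and>
               finite {z\<in>R. \<not> (of_int (op_apply R a (sigma R z)) < r * of_int (op_apply R a z))}"
  proof (intro exI[of _ r] conjI)
    show "r > 1" by fact
    have "{z\<in>R. \<not> (of_int (op_apply R a (sigma R z)) < r * of_int (op_apply R a z))} =
      {z\<in>R. \<not> (of_int (op_apply R (map uminus a) (sigma R z)) > r * of_int (op_apply R (map uminus a) z))}"
      unfolding neg_apply by (auto simp: of_int_minus)
    then show "finite {z\<in>R. \<not> (of_int (op_apply R a (sigma R z)) < r * of_int (op_apply R a z))}"
      using \<open>finite _\<close> by simp
  qed
next
  assume "op_neg R a"
  then obtain N where "\<forall>z\<in>R. \<forall>z'\<in>R. N \<le> z \<and> z < z' \<longrightarrow> op_apply R (map uminus a) z < op_apply R (map uminus a) z'"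
    using pos_mono[OF assms neg_pos[OF \<open>op_neg R a\<close>]] by blast
  then show "\<exists>N. \<forall>z\<in>R. \<forall>z'\<in>R. N \<le> z \<and> z < z' \<longrightarrow> op_apply R a z > op_apply R a z'"
    unfolding neg_apply by (intro exI[of _ N]) auto
qed

end
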